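(* Let $F\in\mathrm{GL}^+(2)$ have singular values $\lambda_1=\lambda_2=c$, and let $H\in\mathbb{R}^{2\times2}$. Define $\lambda_{\max}(t)=\lambda_{\max}(F+tH)$ and $\lambda_{\min}(t)=\lambda_{\min}(F+tH)$, the larger and smaller singular values of $F+tH$. Then the mappings $t\mapsto\lambda_{\max}(t)$ and $t\mapsto\lambda_{\min}(t)$ are both left-differentiable and right-differentiable in a neighbourhood of $t=0$, and $$\partial^-\lambda_{\max}(0)=\partial^+\lambda_{\min}(0)\leq\partial^-\lambda_{\min}(0)=\partial^+\lambda_{\max}(0).$$
   Context: $\mathrm{GL}^+(2)$ is the group of real invertible $2\times2$ matrices with positive determinant. For a real function $f$, the one-sided derivatives are $\partial^-f(t)=\lim_{h\uparrow0}\frac{f(t+h)-f(t)}{h}$ and $\partial^+f(t)=\lim_{h\downarrow0}\frac{f(t+h)-f(t)}{h}$. *)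

theory Defs
  imports "HOL-Analysis.Analysis"
begin

definition singular_values :: "real^2^2 \<Rightarrow> real set" where
  "singular_values A =
     {sqrt \<mu> | \<mu>. \<exists>v::real^2. v \<noteq> 0 \<and> (transpose A ** A) *v v = \<mu> *\<^sub>R v}"

definition sv_max :: "real^2^2 \<Rightarrow> real" where
  "sv_max A = Max (singular_values A)"

definition sv_min :: "real^2^2 \<Rightarrow> real" where
  "sv_min A = Min (singular_values A)"

end

theory Submission
  imports Defs
begin

lemma eig2:
  fixes M :: "real^2^2"
  shows "(\<exists>v::real^2. v \<noteq> 0 \<and> M *v v = \<mu> *\<^sub>R v) \<longleftrightarrow>
         (M$1$1 - \<mu>) * (M$2$2 - \<mu>) - M$1$2 * M$2$1 = 0"
proof
  assume "\<exists>v::real^2. v \<noteq> 0 \<and> M *v v = \<mu> *\<^sub>R v"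
  then obtain v :: "real^2" where v: "v \<noteq> 0" "M *v v = \<mu> *\<^sub>R v" by blast
  have e1: "M$1$1 * v$1 + M$1$2 * v$2 = \<mu> * v$1"
    using arg_cong[OF v(2), of "\<lambda>x. x$1"] by (simp add: matrix_vector_mult_def sum_2)
  have e2: "M$2$1 * v$1 + M$2$2 * v$2 = \<mu> * v$2"
    using arg_cong[OF v(2), of "\<lambda>x. x$2"] by (simp add: matrix_vector_mult_def sum_2)
  have nz: "v$1 \<noteq> 0 \<or> v$2 \<noteq> 0" using v(1) by (auto simp: vec_eq_iff forall_2)
  let ?d = "(M$1$1 - \<mu>) * (M$2$2 - \<mu>) - M$1$2 * M$2$1"
  have z1: "(M$1$1 - \<mu>) * v$1 + M$1$2 * v$2 = 0" using e1 by (simp add: algebra_simps)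
  have z2: "M$2$1 * v$1 + (M$2$2 - \<mu>) * v$2 = 0" using e2 by (simp add: algebra_simps)
  have "?d * v$1 = (M$2$2-\<mu>)*((M$1$1 - \<mu>) * v$1 + M$1$2 * v$2) - M$1$2*(M$2$1 * v$1 + (M$2$2 - \<mu>) * v$2)"
    by (simp add: algebra_simps)
  hence "?d * v$1 = 0" using z1 z2 by simp
  moreover have "?d * v$2 = (M$1$1-\<mu>)*(M$2$1 * v$1 + (M$2$2 - \<mu>) * v$2) - M$2$1*((M$1$1 - \<mu>) * v$1 + M$1$2 * v$2)"
    by (simp add: algebra_simps)
  hence "?d * v$2 = 0" using z1 z2 by simp
  ultimately show "?d = 0" using nz by auto
next
  assume d: "(M$1$1 - \<mu>) * (M$2$2 - \<mu>) - M$1$2 * M$2$1 = 0"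
  have ok: "M *v v = \<mu> *\<^sub>R v" if "M$1$1 * v$1 + M$1$2 * v$2 = \<mu> * v$1"
      "M$2$1 * v$1 + M$2$2 * v$2 = \<mu> * v$2" for v :: "real^2"
    using that by (simp add: vec_eq_iff forall_2 matrix_vector_mult_def sum_2)
  show "\<exists>v::real^2. v \<noteq> 0 \<and> M *v v = \<mu> *\<^sub>R v"
  proof (cases "M$1$2 \<noteq> 0 \<or> \<mu> - M$1$1 \<noteq> 0")
    case True
    let ?v = "vector [M$1$2, \<mu> - M$1$1] :: real^2"
    have "?v \<noteq> 0" using True by (auto simp: vec_eq_iff forall_2)
    moreover have "M *v ?v = \<mu> *\<^sub>R ?v"
      by (rule ok) (use d in \<open>simp_all add: algebra_simps\<close>)
    ultimately show ?thesis by blast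
  next
    case F: False
    show ?thesis
    proof (cases "\<mu> - M$2$2 \<noteq> 0 \<or> M$2$1 \<noteq> 0")
      case True
      let ?v = "vector [\<mu> - M$2$2, M$2$1] :: real^2"
      have "?v \<noteq> 0" using True by (auto simp: vec_eq_iff forall_2)
      moreover have "M *v ?v = \<mu> *\<^sub>R ?v"
        by (rule ok) (use F in \<open>simp_all add: algebra_simps\<close>)
      ultimately show ?thesis by blast
    next
      case False
      let ?v = "vector [1, 0] :: real^2"
      have "?v \<noteq> 0" by (auto simp: vec_eq_iff forall_2)
      moreover have "M *v ?v = \<mu> *\<^sub>R ?v"
        by (rule ok) (use F False in \<open>simp_all add: algebra_simps\<close>)
      ultimately show ?thesis by blast
    qed
  qed
qed


definition "ca A = ((A::real^2^2)$1$1 + A$2$2)/2"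
definition "cb A = ((A::real^2^2)$2$1 - A$1$2)/2"
definition "cp A = ((A::real^2^2)$1$1 - A$2$2)/2"
definition "cq A = ((A::real^2^2)$1$2 + A$2$1)/2"
definition "uu A = sqrt ((ca A)^2 + (cb A)^2)"
definition "ww A = sqrt ((cp A)^2 + (cq A)^2)"

lemma sv_set: "{sqrt \<mu> | \<mu>. \<exists>v::real^2. v \<noteq> 0 \<and> (transpose A ** A) *v v = \<mu> *\<^sub>R v}
   = {uu A + ww A, \<bar>uu A - ww A\<bar>}"
proof -
  let ?M = "transpose A ** A"
  have U: "(uu A)^2 = (ca A)^2 + (cb A)^2" unfolding uu_def by simp
  have W: "(ww A)^2 = (cp A)^2 + (cq A)^2" unfolding ww_def by simp
  have u0: "uu A \<ge> 0" "ww A \<ge> 0" unfolding uu_def ww_def by auto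
  have M: "?M$1$1 = A$1$1^2 + A$2$1^2" "?M$2$2 = A$1$2^2 + A$2$2^2"
     "?M$1$2 = A$1$1*A$1$2 + A$2$1*A$2$2" "?M$2$1 = A$1$1*A$1$2 + A$2$1*A$2$2"
    by (simp_all add: matrix_matrix_mult_def transpose_def sum_2 power2_eq_square)
  have key: "(?M$1$1 - \<mu>) * (?M$2$2 - \<mu>) - ?M$1$2 * ?M$2$1
      = (\<mu> - (uu A + ww A)^2) * (\<mu> - (uu A - ww A)^2)" for \<mu>
  proof -
    have "(\<mu> - (uu A + ww A)^2) * (\<mu> - (uu A - ww A)^2)
       = \<mu>^2 - 2*((uu A)^2 + (ww A)^2)*\<mu> + ((uu A)^2 - (ww A)^2)^2"
      by (simp add: algebra_simps power2_eq_square)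
    also have "\<dots> = \<mu>^2 - (?M$1$1 + ?M$2$2)*\<mu> + (A$1$1*A$2$2 - A$1$2*A$2$1)^2"
    proof -
      have "2*((uu A)^2 + (ww A)^2) = ?M$1$1 + ?M$2$2"
        unfolding U W M ca_def cb_def cp_def cq_def by (simp add: field_simps power2_eq_square)
      moreover have "(uu A)^2 - (ww A)^2 = A$1$1*A$2$2 - A$1$2*A$2$1"
        unfolding U W ca_def cb_def cp_def cq_def by (simp add: field_simps power2_eq_square)
      ultimately show ?thesis by simp
    qed
    also have "\<dots> = (?M$1$1 - \<mu>) * (?M$2$2 - \<mu>) - ?M$1$2 * ?M$2$1"
      unfolding M by (simp add: algebra_simps power2_eq_square)
    finally show ?thesis by simp
  qed
  have ev: "(\<exists>v::real^2. v \<noteq> 0 \<and> ?M *v v = \<mu> *\<^sub>R v) \<longleftrightarrow>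
      \<mu> = (uu A + ww A)^2 \<or> \<mu> = (uu A - ww A)^2" for \<mu>
    unfolding eig2 key by simp
  have s1: "sqrt ((uu A + ww A)^2) = uu A + ww A" using u0 by simp
  have s2: "sqrt ((uu A - ww A)^2) = \<bar>uu A - ww A\<bar>" by simp
  have "{sqrt \<mu> |\<mu>. \<mu> = (uu A + ww A)^2 \<or> \<mu> = (uu A - ww A)^2}
     = {sqrt ((uu A + ww A)^2), sqrt ((uu A - ww A)^2)}" by blast
  then show ?thesis unfolding ev s1 s2 by simp
qed


lemma sv_max_eq: "sv_max A = uu A + ww A"
proof -
  have "uu A \<ge> 0" "ww A \<ge> 0" unfolding uu_def ww_def by auto
  then have "\<bar>uu A - ww A\<bar> \<le> uu A + ww A" by arith
  then show ?thesis unfolding sv_max_def singular_values_def sv_set by (simp add: max_def)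
qed

lemma sv_min_eq: "sv_min A = \<bar>uu A - ww A\<bar>"
proof -
  have "uu A \<ge> 0" "ww A \<ge> 0" unfolding uu_def ww_def by auto
  then have "\<bar>uu A - ww A\<bar> \<le> uu A + ww A" by arith
  then show ?thesis unfolding sv_min_def singular_values_def sv_set by (simp add: min_def)
qed

lemma det_eq: "det A = (uu A)^2 - (ww A)^2"
proof -
  have U: "(uu A)^2 = (ca A)^2 + (cb A)^2" unfolding uu_def by simp
  have W: "(ww A)^2 = (cp A)^2 + (cq A)^2" unfolding ww_def by simp
  show ?thesis
  unfolding det_2 U W ca_def cb_def cp_def cq_def
  by (simp add: field_simps power2_eq_square)
qed

lemma absL: "((\<lambda>s::real. \<bar>s\<bar>) has_real_derivative (if t > 0 then 1 else -1)) (at_left t)"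
proof (cases "t > 0")
  case True
  have "((\<lambda>s::real. s) has_real_derivative 1) (at_left t)" by (rule DERIV_ident)
  then have "((\<lambda>s::real. s) has_real_derivative 1) (at_left t)" .
  moreover have "eventually (\<lambda>s. s = \<bar>s\<bar>) (at_left t)"
    using True eventually_at_left_real[of 0 t] by (auto elim: eventually_mono)
  ultimately show ?thesis using True has_field_derivative_cong_eventually[of "\<lambda>s. s" "\<lambda>s. \<bar>s\<bar>" t "{..<t}" 1]
    by simp
next
  case False
  have "((\<lambda>s::real. - s) has_real_derivative -1) (at_left t)" using DERIV_minus[OF DERIV_ident] by (intro derivative_eq_intros) auto
  moreover have "eventually (\<lambda>s. - s = \<bar>s\<bar>) (at_left t)"
    using False unfolding eventually_at_filter by (auto intro!: always_eventually)
  ultimately show ?thesis using False has_field_derivative_cong_eventually[of "\<lambda>s. - s" "\<lambda>s. \<bar>s\<bar>" t "{..<t}" "-1"]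
    by simp
qed

lemma absR: "((\<lambda>s::real. \<bar>s\<bar>) has_real_derivative (if t < 0 then -1 else 1)) (at_right t)"
proof (cases "t < 0")
  case True
  have "((\<lambda>s::real. - s) has_real_derivative -1) (at_right t)" using DERIV_minus[OF DERIV_ident] by (intro derivative_eq_intros) auto
  moreover have "eventually (\<lambda>s. - s = \<bar>s\<bar>) (at_right t)"
    using True eventually_at_right_real[of t 0] by (auto elim: eventually_mono)
  ultimately show ?thesis using True has_field_derivative_cong_eventually[of "\<lambda>s. - s" "\<lambda>s. \<bar>s\<bar>" t "{t<..}" "-1"]
    by simp
next
  case False
  have "((\<lambda>s::real. s) has_real_derivative 1) (at_right t)" by (rule DERIV_ident)
  moreover have "eventually (\<lambda>s. s = \<bar>s\<bar>) (at_right t)"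
    using False unfolding eventually_at_filter by (auto intro!: always_eventually)
  ultimately show ?thesis using False has_field_derivative_cong_eventually[of "\<lambda>s. s" "\<lambda>s. \<bar>s\<bar>" t "{t<..}" 1]
    by simp
qed


theorem lemma3p8:
  fixes F H :: "real^2^2" and c :: real
  assumes "det F > 0"
    and "sv_max F = c" and "sv_min F = c"
  shows "(\<exists>\<epsilon>>0. \<forall>t. \<bar>t\<bar> < \<epsilon> \<longrightarrow>
            (\<exists>D. ((\<lambda>s. sv_max (F + s *\<^sub>R H)) has_real_derivative D) (at_left t)) \<and>
            (\<exists>D. ((\<lambda>s. sv_max (F + s *\<^sub>R H)) has_real_derivative D) (at_right t)) \<and>
            (\<exists>D. ((\<lambda>s. sv_min (F + s *\<^sub>R H)) has_real_derivative D) (at_left t)) \<and>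
            (\<exists>D. ((\<lambda>s. sv_min (F + s *\<^sub>R H)) has_real_derivative D) (at_right t)))
      \<and> (\<exists>a b. ((\<lambda>s. sv_max (F + s *\<^sub>R H)) has_real_derivative a) (at_left 0) \<and>
               ((\<lambda>s. sv_min (F + s *\<^sub>R H)) has_real_derivative a) (at_right 0) \<and>
               ((\<lambda>s. sv_min (F + s *\<^sub>R H)) has_real_derivative b) (at_left 0) \<and>
               ((\<lambda>s. sv_max (F + s *\<^sub>R H)) has_real_derivative b) (at_right 0) \<and>
               a \<le> b)"
proof -
  let ?A = "\<lambda>s. F + s *\<^sub>R H"
  have lin: "ca (?A s) = ca F + s * ca H" "cb (?A s) = cb F + s * cb H"
     "cp (?A s) = cp F + s * cp H" "cq (?A s) = cq F + s * cq H" for s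
    by (simp_all add: ca_def cb_def cp_def cq_def field_simps)
  have u0: "uu F \<ge> 0" "ww F \<ge> 0" by (auto simp: uu_def ww_def)
  from assms have "uu F + ww F = \<bar>uu F - ww F\<bar>" by (simp add: sv_max_eq sv_min_eq)
  hence "uu F = 0 \<or> ww F = 0" using u0 by arith
  moreover have sq: "(uu F)^2 > (ww F)^2" using assms(1) det_eq by simp
  moreover have uF: "uu F > 0"
  proof (rule ccontr)
    assume "\<not> uu F > 0"
    then have "uu F = 0" using u0 by simp
    then show False using sq by (smt (verit) zero_le_power2 power_zero_numeral)
  qed
  ultimately have wF: "ww F = 0" by simp
  have "(cp F)^2 + (cq F)^2 = 0" using wF unfolding ww_def by simp
  hence cpF: "cp F = 0" and cqF: "cq F = 0" by (simp_all add: sum_power2_eq_zero_iff)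
  define r where "r = ww H"
  have r0: "r \<ge> 0" by (simp add: r_def ww_def)
  define g where "g s = (ca F + s * ca H)^2 + (cb F + s * cb H)^2" for s
  have U: "uu (?A s) = sqrt (g s)" for s by (simp add: uu_def lin g_def)
  have W: "ww (?A s) = r * \<bar>s\<bar>" for s
  proof -
    have "(s * cp H)^2 + (s * cq H)^2 = s^2 * ((cp H)^2 + (cq H)^2)" by (simp add: algebra_simps power2_eq_square)
    then show ?thesis unfolding ww_def lin cpF cqF r_def by (simp add: real_sqrt_mult)
  qed
  have smax: "sv_max (?A s) = sqrt (g s) + r * \<bar>s\<bar>" for s by (simp add: sv_max_eq U W)
  have smin: "sv_min (?A s) = \<bar>sqrt (g s) - r * \<bar>s\<bar>\<bar>" for s by (simp add: sv_min_eq U W)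
  define h where "h s = sqrt (g s) - r * \<bar>s\<bar>" for s
  have hc: "isCont h 0" unfolding h_def g_def by (intro continuous_intros)
  have h0: "h 0 > 0" using uF unfolding h_def g_def uu_def by simp
  obtain e where e: "e > 0" "\<And>s. \<bar>s\<bar> < e \<Longrightarrow> h s > 0"
  proof -
    from hc h0 obtain d where d: "d > 0" "\<forall>x'. dist x' 0 < d \<longrightarrow> dist (h x') (h 0) < h 0"
      unfolding continuous_at_eps_delta by blast
    show ?thesis
    proof (rule that[OF d(1)])
      fix s :: real assume "\<bar>s\<bar> < d"
      then have "dist (h s) (h 0) < h 0" using d(2) by (simp add: dist_real_def)
      then show "h s > 0" by (simp add: dist_real_def)
    qed
  qed
  have gpos: "g s > 0" if "\<bar>s\<bar> < e" for s
  proof -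
    have "sqrt (g s) > 0" using e(2)[OF that] r0 unfolding h_def
      by (smt (verit) abs_ge_zero mult_nonneg_nonneg)
    then show ?thesis by simp
  qed
  have hs: "h s = sv_min (?A s)" if "\<bar>s\<bar> < e" for s
    using e(2)[of s] that by (simp add: smin h_def)
  define du where "du t = inverse (sqrt (g t)) / 2 * (2 * (ca F + t * ca H) * ca H + 2 * (cb F + t * cb H) * cb H)" for t
  have dg: "((\<lambda>s. sqrt (g s)) has_real_derivative du t) (at t)" if "g t > 0" for t
    using that unfolding du_def g_def
    by (auto intro!: derivative_eq_intros simp: algebra_simps power2_eq_square)
  have gen: "((\<lambda>s. sv_max (?A s)) has_real_derivative du t + r * da) (at t within S) \<and>
             ((\<lambda>s. sv_min (?A s)) has_real_derivative du t - r * da) (at t within S)"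
    if t: "\<bar>t\<bar> < e" and da: "((\<lambda>s. \<bar>s\<bar>) has_real_derivative da) (at t within S)" for t da S
  proof
    have du: "((\<lambda>s. sqrt (g s)) has_real_derivative du t) (at t within S)"
      using has_field_derivative_at_within[OF dg[OF gpos[OF t]]] .
    show "((\<lambda>s. sv_max (?A s)) has_real_derivative du t + r * da) (at t within S)"
      unfolding smax by (intro DERIV_add DERIV_cmult du da)
    have hd: "(h has_real_derivative du t - r * da) (at t within S)"
      unfolding h_def by (intro DERIV_diff DERIV_cmult du da)
    have op: "open {-e<..<e}" by simp
    have "eventually (\<lambda>s. s \<in> {-e<..<e}) (nhds t)"
      using t by (intro eventually_nhds_in_open[OF op]) auto
    then have ev: "eventually (\<lambda>s. h s = sv_min (?A s)) (at t within S)"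
      unfolding eventually_at_filter
      by (rule eventually_mono) (use hs in \<open>auto simp: abs_less_iff\<close>)
    have "h t = sv_min (?A t)" using hs[OF t] .
    then show "((\<lambda>s. sv_min (?A s)) has_real_derivative du t - r * da) (at t within S)"
      using hd has_field_derivative_cong_eventually[OF ev] by simp
  qed
  show ?thesis
  proof
    show "\<exists>\<epsilon>>0. \<forall>t. \<bar>t\<bar> < \<epsilon> \<longrightarrow>
            (\<exists>D. ((\<lambda>s. sv_max (F + s *\<^sub>R H)) has_real_derivative D) (at_left t)) \<and>
            (\<exists>D. ((\<lambda>s. sv_max (F + s *\<^sub>R H)) has_real_derivative D) (at_right t)) \<and>
            (\<exists>D. ((\<lambda>s. sv_min (F + s *\<^sub>R H)) has_real_derivative D) (at_left t)) \<and>
            (\<exists>D. ((\<lambda>s. sv_min (F + s *\<^sub>R H)) has_real_derivative D) (at_right t))"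
      using e(1) gen[OF _ absL] gen[OF _ absR] by blast
    have L: "((\<lambda>s. sv_max (?A s)) has_real_derivative du 0 - r) (at_left 0) \<and>
             ((\<lambda>s. sv_min (?A s)) has_real_derivative du 0 + r) (at_left 0)"
      using gen[OF _ absL, of 0] e(1) by simp
    have R: "((\<lambda>s. sv_max (?A s)) has_real_derivative du 0 + r) (at_right 0) \<and>
             ((\<lambda>s. sv_min (?A s)) has_real_derivative du 0 - r) (at_right 0)"
      using gen[OF _ absR, of 0] e(1) by simp
    show "\<exists>a b. ((\<lambda>s. sv_max (F + s *\<^sub>R H)) has_real_derivative a) (at_left 0) \<and>
               ((\<lambda>s. sv_min (F + s *\<^sub>R H)) has_real_derivative a) (at_right 0) \<and>
               ((\<lambda>s. sv_min (F + s *\<^sub>R H)) has_real_derivative b) (at_left 0) \<and>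
               ((\<lambda>s. sv_max (F + s *\<^sub>R H)) has_real_derivative b) (at_right 0) \<and>
               a \<le> b"
      using L R r0 by (intro exI[of _ "du 0 - r"] exI[of _ "du 0 + r"]) auto
  qed
qed

end
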